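(* Let $\mathcal{H}$ be a finite-dimensional Hilbert space and let $\mathcal{A}_0$ be an observable (a Hermitian operator) on $\mathcal{H}$. Suppose the observable evolves in the Heisenberg picture according to the adjoint master equation $\frac{d\mathcal{A}_t}{dt}=\mathcal{L}_t^{\dagger}(\mathcal{A}_t)$, where $\mathcal{L}_t^{\dagger}$ is the adjoint of the Liouvillian super-operator generating the dynamics, with $\mathcal{A}_t$ differentiable in $t$. Then for every $T>0$ the time $T$ needed to generate the quantumness $Q(\mathcal{A}_0,\mathcal{A}_T)$ satisfies $$T\ \geq\ T_Q=\frac{\sqrt{Q(\mathcal{A}_0,\mathcal{A}_T)}}{2\,\langle\!\langle \lVert[\mathcal{A}_0,\mathcal{L}_t^{\dagger}(\mathcal{A}_t)]\rVert_{\rm HS}\rangle\!\rangle_T},$$ (whenever the time average in the denominator is nonzero).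
   Context: For operators $X,Y$ on $\mathcal{H}$, the quantumness is $Q(X,Y)=2\lVert[X,Y]\rVert_{\rm HS}^2$, where $[X,Y]=XY-YX$ and $\lVert O\rVert_{\rm HS}=\sqrt{\operatorname{tr}(O^{\dagger}O)}$ is the Hilbert–Schmidt norm. The Liouvillian $\mathcal{L}_t$ generates the Schrödinger-picture dynamics $\dot\rho_t=\mathcal{L}_t(\rho_t)$, and its adjoint $\mathcal{L}_t^\dagger$ is defined by $\operatorname{tr}(\mathcal{A}\,\mathcal{L}_t(\rho))=\operatorname{tr}(\mathcal{L}_t^\dagger(\mathcal{A})\rho)$ for all states $\rho$ and operators $\mathcal{A}$. For a function $X_t$, $\langle\!\langle X_t\rangle\!\rangle_T=\frac{1}{T}\int_0^T X_t\,dt$ denotes its time average over $[0,T]$. *)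

theory Defs
  imports "HOL-Analysis.Analysis"
begin

text \<open>Operators on a finite-dimensional Hilbert space C^n, represented as complex
  matrices indexed by a finite type 'n.\<close>

type_synonym 'n op = "complex^'n^'n"

definition cadj :: "'n::finite op \<Rightarrow> 'n op" where
  "cadj M = (\<chi> i j. cnj (M $ j $ i))"

definition hermitian :: "'n::finite op \<Rightarrow> bool" where
  "hermitian M \<longleftrightarrow> cadj M = M"

definition commutator :: "'n::finite op \<Rightarrow> 'n op \<Rightarrow> 'n op" where
  "commutator X Y = X ** Y - Y ** X"

definition hs_norm :: "'n::finite op \<Rightarrow> real" where
  "hs_norm M = sqrt (Re (trace (cadj M ** M)))"

definition quantumness :: "'n::finite op \<Rightarrow> 'n op \<Rightarrow> real" where
  "quantumness X Y = 2 * (hs_norm (commutator X Y))\<^sup>2"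

definition is_state :: "'n::finite op \<Rightarrow> bool" where
  "is_state \<rho> \<longleftrightarrow> hermitian \<rho> \<and> trace \<rho> = 1 \<and>
     (\<forall>v::complex^'n. 0 \<le> Re (\<Sum>i\<in>UNIV. cnj (v $ i) * (\<rho> *v v) $ i))"

definition is_adjoint_superop :: "('n::finite op \<Rightarrow> 'n op) \<Rightarrow> ('n op \<Rightarrow> 'n op) \<Rightarrow> bool" where
  "is_adjoint_superop L Ldag \<longleftrightarrow>
     (\<forall>\<rho> A. is_state \<rho> \<longrightarrow> trace (A ** L \<rho>) = trace (Ldag A ** \<rho>))"

definition time_avg :: "real \<Rightarrow> (real \<Rightarrow> real) \<Rightarrow> real" where
  "time_avg T f = integral {0..T} f / T"

end

theory Submission
  imports Defs
begin

lemma mm_diff_r: "(A::'n::finite op) ** (B - C) = A ** B - A ** C"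
  by (simp add: vec_eq_iff matrix_matrix_mult_def algebra_simps sum_subtractf)

lemma mm_diff_l: "((B::'n::finite op) - C) ** A = B ** A - C ** A"
  by (simp add: vec_eq_iff matrix_matrix_mult_def algebra_simps sum_subtractf)

lemma mm_add_l: "((B::'n::finite op) + C) ** A = B ** A + C ** A"
  by (simp add: vec_eq_iff matrix_matrix_mult_def algebra_simps sum.distrib)

lemma mm_scale_l: "((c::real) *\<^sub>R (B::'n::finite op)) ** A = c *\<^sub>R (B ** A)"
  by (simp add: vec_eq_iff matrix_matrix_mult_def scaleR_sum_right)

lemma comm_bl: "bounded_linear (commutator (X::'n::finite op))"
proof -
  have "linear (commutator X)"
    by (rule linearI) (simp_all add: commutator_def matrix_add_ldistrib mm_add_l matrix_scalar_ac mm_scale_l algebra_simps)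
  then show ?thesis by (simp add: linear_conv_bounded_linear)
qed

lemma hs_norm_eq: "hs_norm (M::'n::finite op) = norm M"
proof -
  have "Re (trace (cadj M ** M)) = (\<Sum>i\<in>UNIV. \<Sum>k\<in>UNIV. (cmod (M $ k $ i))\<^sup>2)"
  proof -
    have e: "(cmod z)\<^sup>2 = Re z * Re z + Im z * Im z" for z
      using cmod_power2[of z] by (simp add: power2_eq_square)
    show ?thesis
      by (simp add: trace_def cadj_def matrix_matrix_mult_def Re_sum e)
  qed
  also have "\<dots> = (\<Sum>k\<in>UNIV. (norm (M $ k))\<^sup>2)"
    by (subst sum.swap) (simp add: norm_vec_def L2_set_def sum_nonneg)
  finally show ?thesis by (simp add: hs_norm_def norm_vec_def L2_set_def)
qed

theorem theorem1:
  fixes A :: "real \<Rightarrow> 'n::finite op"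
    and L Ldag :: "real \<Rightarrow> 'n op \<Rightarrow> 'n op"
    and T :: real
  assumes herm0: "hermitian (A 0)"
    and adj: "\<forall>t. is_adjoint_superop (L t) (Ldag t)"
    and deriv: "\<forall>t\<ge>0. (A has_vector_derivative Ldag t (A t)) (at t within {0..})"
    and Tpos: "T > 0"
    and avg_nz: "time_avg T (\<lambda>t. hs_norm (commutator (A 0) (Ldag t (A t)))) \<noteq> 0"
  shows "T \<ge> sqrt (quantumness (A 0) (A T)) /
               (2 * time_avg T (\<lambda>t. hs_norm (commutator (A 0) (Ldag t (A t)))))"
proof -
  define C where "C t = commutator (A 0) (Ldag t (A t))" for t
  have "((\<lambda>t. Ldag t (A t)) has_integral (A T - A 0)) {0..T}"
  proof (rule fundamental_theorem_of_calculus)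
    show "0 \<le> T" using Tpos by simp
    fix x assume "x \<in> {0..T}"
    then show "(A has_vector_derivative Ldag x (A x)) (at x within {0..T})"
      using deriv by (auto intro: has_vector_derivative_within_subset)
  qed
  from has_integral_linear[OF this comm_bl[of "A 0"]]
  have hi: "(C has_integral commutator (A 0) (A T - A 0)) {0..T}"
    unfolding C_def by (simp add: o_def)
  have cc: "commutator (A 0) (A T - A 0) = commutator (A 0) (A T)"
    by (simp add: commutator_def mm_diff_r mm_diff_l)
  define I where "I = integral {0..T} (\<lambda>t. norm (C t))"
  have "I \<noteq> 0" using avg_nz Tpos by (simp add: time_avg_def I_def C_def hs_norm_eq)
  then have nint: "(\<lambda>t. norm (C t)) integrable_on {0..T}"
    using not_integrable_integral I_def by blast
  have N: "norm (commutator (A 0) (A T)) \<le> I"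
    unfolding I_def
    using integral_norm_bound_integral[OF has_integral_integrable[OF hi] nint]
      integral_unique[OF hi] cc by simp
  have I0: "I > 0"
    using N \<open>I \<noteq> 0\<close> by (metis norm_ge_zero order.order_iff_strict order_trans)
  have avg: "time_avg T (\<lambda>t. hs_norm (commutator (A 0) (Ldag t (A t)))) = I / T"
    by (simp add: time_avg_def I_def C_def hs_norm_eq)
  have q: "sqrt (quantumness (A 0) (A T)) = sqrt 2 * norm (commutator (A 0) (A T))"
    by (simp add: quantumness_def hs_norm_eq real_sqrt_mult)
  have s2: "sqrt 2 \<le> (2::real)"
  proof -
    have "sqrt 2 \<le> sqrt ((2::real)^2)" by (rule real_sqrt_le_mono) simp
    also have "\<dots> = 2" using real_sqrt_abs[of "2::real"] by (simp only: abs_numeral)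
    finally show ?thesis .
  qed
  have "sqrt 2 * norm (commutator (A 0) (A T)) \<le> 2 * I"
    using mult_mono[OF s2 N] by simp
  then show ?thesis
    using I0 Tpos by (simp add: avg q field_simps)
qed

end
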